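(* Assume that for every $z\in\mathcal Z_s$ the maximum $\max_{\alpha\in\mathbb R^k,\beta\in\mathbb R^m_+}L(z,\alpha,\beta)$ is attained, and let $\mathrm{BR}(z)$ be a maximizer selected by a fixed deterministic rule (a single-valued map). Starting from any $(z_0,\alpha_0,\beta_0)$ with $z_0\in\mathcal Z_s$, consider the iteration $$(\alpha_{t+1},\beta_{t+1})=\mathrm{BR}(z_t),\qquad z_{t+1}=\mathds 1_n(\mathcal J(\alpha_t,\beta_t)).$$ Then the sequence $(z_t,\alpha_t,\beta_t)$ is eventually periodic (after finitely many iterations it enters a cycle). If the cycle has length one, i.e. the iterates are eventually constant equal to $(\bar z,\bar\alpha,\bar\beta)$, then $\bar z$ is an optimal solution of the outer minimization in $\min_{z\in\mathcal Z_s}\max_{\alpha\in\mathbb R^k,\beta\in\mathbb R^m_+}L(z,\alpha,\beta)$, and $(\bar z,\bar\alpha,\bar\beta)$ is a saddle point: $L(\bar z,\alpha,\beta)\le L(\bar z,\bar\alpha,\bar\beta)\le L(z,\bar\alpha,\bar\beta)$ for all $z\in\mathcal Z_s$, $\alpha\in\mathbb R^k$, $\beta\in\mathbb R^m_+$.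
   Context: Let $Q\in\mathbb R^{n\times n}$ be symmetric positive semidefinite with eigendecomposition $Q=\sum_{i=1}^n\lambda_i v_iv_i^\top$, $\lambda_1\ge\cdots\ge\lambda_n\ge0$, $\{v_i\}$ orthonormal. Let $c\in\mathbb R^n$, $A\in\mathbb R^{m\times n}$, $b\in\mathbb R^m$, $\eta>0$, $s\le n$ a positive integer, $k\le n$, $V=[v_1,\dots,v_k]$, $\Lambda=\mathrm{diag}(\lambda_1,\dots,\lambda_k)$. Let $\mathcal Z_s=\{z\in\{0,1\}^n:\sum_j z_j\le s\}$ and $$L(z,\alpha,\beta)=-\beta^\top b-\tfrac14\|\alpha\|_2^2-\tfrac{\eta}{4}(c+V\sqrt\Lambda\alpha+A^\top\beta)^\top\mathrm{diag}(z)(c+V\sqrt\Lambda\alpha+A^\top\beta).$$ For $(\alpha,\beta)$, let $\gamma=c+V\sqrt\Lambda\alpha+A^\top\beta$ and let $\mathcal J(\alpha,\beta)\subseteq[n]$ be the set of $s$ indices with the $s$ largest values of $|\gamma_j|$, ties broken by a fixed deterministic rule; $\mathds 1_n(\mathcal J)\in\{0,1\}^n$ is the indicator vector of $\mathcal J$. *)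

theory Defs
  imports Main "HOL-Library.Indicator_Function"
begin

text \<open>Vectors in R^d are represented as functions nat => real that vanish
  outside {0..<d}. Indices are 0-based.\<close>

definition Rvec :: "nat \<Rightarrow> (nat \<Rightarrow> real) set" where
  "Rvec d = {x. \<forall>j\<ge>d. x j = 0}"

definition Rnonneg :: "nat \<Rightarrow> (nat \<Rightarrow> real) set" where
  "Rnonneg d = {x \<in> Rvec d. \<forall>j<d. 0 \<le> x j}"

definition Zset :: "nat \<Rightarrow> nat \<Rightarrow> (nat \<Rightarrow> real) set" where
  "Zset n s = {z. (\<forall>j<n. z j = 0 \<or> z j = 1) \<and> (\<forall>j\<ge>n. z j = 0)
                   \<and> (\<Sum>j<n. z j) \<le> real s}"

text \<open>gamma = c + V sqrt(Lambda) alpha + A^T beta, where v l is the l-th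
  eigenvector (v l j its j-th component), lam l the l-th eigenvalue,
  and A i j the (i,j) entry of the m x n matrix A.\<close>
definition gamma :: "nat \<Rightarrow> nat \<Rightarrow> (nat \<Rightarrow> real) \<Rightarrow> (nat \<Rightarrow> real)
    \<Rightarrow> (nat \<Rightarrow> nat \<Rightarrow> real) \<Rightarrow> (nat \<Rightarrow> nat \<Rightarrow> real)
    \<Rightarrow> (nat \<Rightarrow> real) \<Rightarrow> (nat \<Rightarrow> real) \<Rightarrow> nat \<Rightarrow> real" where
  "gamma k m c lam v A \<alpha> \<beta> j =
     c j + (\<Sum>i<k. v i j * sqrt (lam i) * \<alpha> i) + (\<Sum>i<m. A i j * \<beta> i)"

definition Lfun :: "nat \<Rightarrow> nat \<Rightarrow> nat \<Rightarrow> real \<Rightarrow> (nat \<Rightarrow> real) \<Rightarrow> (nat \<Rightarrow> real)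
    \<Rightarrow> (nat \<Rightarrow> nat \<Rightarrow> real) \<Rightarrow> (nat \<Rightarrow> nat \<Rightarrow> real) \<Rightarrow> (nat \<Rightarrow> real)
    \<Rightarrow> (nat \<Rightarrow> real) \<Rightarrow> (nat \<Rightarrow> real) \<Rightarrow> (nat \<Rightarrow> real) \<Rightarrow> real" where
  "Lfun n k m \<eta> c lam v A b z \<alpha> \<beta> =
     - (\<Sum>i<m. \<beta> i * b i) - (1/4) * (\<Sum>i<k. (\<alpha> i)\<^sup>2)
     - (\<eta>/4) * (\<Sum>j<n. z j * (gamma k m c lam v A \<alpha> \<beta> j)\<^sup>2)"

definition top_indices :: "nat \<Rightarrow> nat \<Rightarrow> (nat \<Rightarrow> real) \<Rightarrow> nat set \<Rightarrow> bool" where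
  "top_indices n s g J \<longleftrightarrow> J \<subseteq> {..<n} \<and> card J = s \<and>
     (\<forall>j\<in>J. \<forall>j'\<in>{..<n} - J. \<bar>g j'\<bar> \<le> \<bar>g j\<bar>)"

definition ind_vec :: "nat set \<Rightarrow> nat \<Rightarrow> real" where
  "ind_vec J = (\<lambda>j. if j \<in> J then 1 else 0)"

definition maxval :: "nat \<Rightarrow> nat \<Rightarrow> nat \<Rightarrow> real \<Rightarrow> (nat \<Rightarrow> real) \<Rightarrow> (nat \<Rightarrow> real)
    \<Rightarrow> (nat \<Rightarrow> nat \<Rightarrow> real) \<Rightarrow> (nat \<Rightarrow> nat \<Rightarrow> real) \<Rightarrow> (nat \<Rightarrow> real)
    \<Rightarrow> (nat \<Rightarrow> real) \<Rightarrow> real" where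
  "maxval n k m \<eta> c lam v A b z =
     Sup {Lfun n k m \<eta> c lam v A b z \<alpha> \<beta> | \<alpha> \<beta>. \<alpha> \<in> Rvec k \<and> \<beta> \<in> Rnonneg m}"

end

theory Submission
  imports Defs
begin


lemma shift_eq:
  fixes st :: "nat \<Rightarrow> 'a"
  assumes "\<forall>t. st (Suc t) = F (st t)" "st a = st b"
  shows "st (a + d) = st (b + d)"
  using assms by (induction d) auto

lemma top_sum_ge:
  fixes g :: "nat \<Rightarrow> real"
  assumes J: "top_indices n s g J" and S: "S \<subseteq> {..<n}" and cS: "card S \<le> s"
  shows "(\<Sum>j\<in>S. (g j)\<^sup>2) \<le> (\<Sum>j\<in>J. (g j)\<^sup>2)"
proof -
  have JS: "J \<subseteq> {..<n}" "card J = s" and top: "\<forall>j\<in>J. \<forall>j'\<in>{..<n} - J. \<bar>g j'\<bar> \<le> \<bar>g j\<bar>"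
    using J unfolding top_indices_def by auto
  have fJ: "finite J" and fS: "finite S" using JS S finite_subset by blast+
  have eS: "(\<Sum>j\<in>S. (g j)\<^sup>2) = (\<Sum>j\<in>S - J. (g j)\<^sup>2) + (\<Sum>j\<in>S \<inter> J. (g j)\<^sup>2)"
    proof -
    have "S - (S \<inter> J) = S - J" by blast
    thus ?thesis using sum.subset_diff[of "S \<inter> J" S "\<lambda>j. (g j)\<^sup>2"] fS by simp
  qed
  have eJ: "(\<Sum>j\<in>J. (g j)\<^sup>2) = (\<Sum>j\<in>J - S. (g j)\<^sup>2) + (\<Sum>j\<in>S \<inter> J. (g j)\<^sup>2)"
    proof -
    have "J - (S \<inter> J) = J - S" by blast
    thus ?thesis using sum.subset_diff[of "S \<inter> J" J "\<lambda>j. (g j)\<^sup>2"] fJ by simp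
  qed
  have card_le: "card (S - J) \<le> card (J - S)"
  proof -
    have "card (S - J) = card S - card (S \<inter> J)" using card_Diff_subset_Int[of S J] fS by simp
    moreover have "card (J - S) = card J - card (S \<inter> J)" using card_Diff_subset_Int[of J S] fJ by (simp add: Int_commute)
    ultimately show ?thesis using cS JS by linarith
  qed
  have key: "(\<Sum>j\<in>S - J. (g j)\<^sup>2) \<le> (\<Sum>j\<in>J - S. (g j)\<^sup>2)"
  proof (cases "S - J = {}")
    case True
    have "(\<Sum>j\<in>S - J. (g j)\<^sup>2) = 0" by (simp only: True sum.empty)
    thus ?thesis by (simp add: sum_nonneg)
  next
    case False
    define \<mu> where "\<mu> = Max ((\<lambda>j. (g j)\<^sup>2) ` (S - J))"
    have fin: "finite (S - J)" using fS by simp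
    have up: "\<forall>j\<in>S - J. (g j)\<^sup>2 \<le> \<mu>" unfolding \<mu>_def using fin by simp
    have mu0: "0 \<le> \<mu>" using up False by (meson all_not_in_conv order_trans zero_le_power2)
    have lo: "\<forall>j\<in>J - S. \<mu> \<le> (g j)\<^sup>2"
    proof
      fix j assume j: "j \<in> J - S"
      have "\<mu> \<in> (\<lambda>j. (g j)\<^sup>2) ` (S - J)" unfolding \<mu>_def using fin False by simp
      then obtain j' where j': "j' \<in> S - J" "\<mu> = (g j')\<^sup>2" by auto
      have "j' \<in> {..<n} - J" using j' S by auto
      hence "\<bar>g j'\<bar> \<le> \<bar>g j\<bar>" using top j by auto
      thus "\<mu> \<le> (g j)\<^sup>2" using j' by (simp add: abs_le_square_iff)
    qed
    have "(\<Sum>j\<in>S - J. (g j)\<^sup>2) \<le> (\<Sum>j\<in>S - J. \<mu>)" using up by (intro sum_mono) auto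
    also have "\<dots> = real (card (S - J)) * \<mu>" by simp
    also have "\<dots> \<le> real (card (J - S)) * \<mu>" using card_le mu0 by (intro mult_right_mono) auto
    also have "\<dots> = (\<Sum>j\<in>J - S. \<mu>)" by simp
    also have "\<dots> \<le> (\<Sum>j\<in>J - S. (g j)\<^sup>2)" using lo by (intro sum_mono) auto
    finally show ?thesis .
  qed
  show ?thesis using eS eJ key by linarith
qed

lemma zsum_eq:
  assumes "z \<in> Zset n s"
  shows "(\<Sum>j<n. z j * f j) = (\<Sum>j\<in>{j\<in>{..<n}. z j = 1}. f j)"
    and "card {j\<in>{..<n}. z j = 1} \<le> s"
proof -
  have z01: "\<forall>j<n. z j = 0 \<or> z j = 1" and sz: "(\<Sum>j<n. z j) \<le> real s" using assms unfolding Zset_def by auto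
  have a: "\<And>f. (\<Sum>j<n. z j * f j) = (\<Sum>j<n. if z j = 1 then f j else 0)"
    by (rule sum.cong) (use z01 in auto)
  show "(\<Sum>j<n. z j * f j) = (\<Sum>j\<in>{j\<in>{..<n}. z j = 1}. f j)"
    unfolding a using sum.inter_filter[of "{..<n}" f "\<lambda>j. z j = 1"] by simp
  have "(\<Sum>j<n. z j) = (\<Sum>j<n. z j * 1)" by simp
  also have "\<dots> = (\<Sum>j\<in>{j\<in>{..<n}. z j = 1}. 1)"
    unfolding a using sum.inter_filter[of "{..<n}" "\<lambda>_. 1::real" "\<lambda>j. z j = 1"] by simp
  finally have "real (card {j\<in>{..<n}. z j = 1}) \<le> real s" using sz by simp
  thus "card {j\<in>{..<n}. z j = 1} \<le> s" by simp
qed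

theorem proposition3p3:
  fixes n m k s :: nat and \<eta> :: real
    and Q :: "nat \<Rightarrow> nat \<Rightarrow> real" and lam :: "nat \<Rightarrow> real" and v :: "nat \<Rightarrow> nat \<Rightarrow> real"
    and c :: "nat \<Rightarrow> real" and A :: "nat \<Rightarrow> nat \<Rightarrow> real" and b :: "nat \<Rightarrow> real"
    and BR :: "(nat \<Rightarrow> real) \<Rightarrow> (nat \<Rightarrow> real) \<times> (nat \<Rightarrow> real)"
    and J :: "(nat \<Rightarrow> real) \<Rightarrow> (nat \<Rightarrow> real) \<Rightarrow> nat set"
    and zs as bs :: "nat \<Rightarrow> nat \<Rightarrow> real"
  assumes Q_sym: "\<forall>i<n. \<forall>j<n. Q i j = Q j i"
    and Q_psd: "\<forall>x. 0 \<le> (\<Sum>i<n. \<Sum>j<n. x i * Q i j * x j)"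
    and Q_eig: "\<forall>i<n. \<forall>j<n. Q i j = (\<Sum>l<n. lam l * v l i * v l j)"
    and v_orth: "\<forall>l<n. \<forall>l'<n. (\<Sum>j<n. v l j * v l' j) = (if l = l' then 1 else 0)"
    and lam_dec: "\<forall>l l'. l \<le> l' \<and> l' < n \<longrightarrow> lam l' \<le> lam l"
    and lam_nonneg: "\<forall>l<n. 0 \<le> lam l"
    and eta_pos: "0 < \<eta>"
    and s_pos: "0 < s" and s_le: "s \<le> n" and k_le: "k \<le> n"
    and attained: "\<forall>z\<in>Zset n s. \<exists>\<alpha>\<in>Rvec k. \<exists>\<beta>\<in>Rnonneg m.
        \<forall>\<alpha>'\<in>Rvec k. \<forall>\<beta>'\<in>Rnonneg m.
          Lfun n k m \<eta> c lam v A b z \<alpha>' \<beta>' \<le> Lfun n k m \<eta> c lam v A b z \<alpha> \<beta>"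
    and BR_max: "\<forall>z\<in>Zset n s. fst (BR z) \<in> Rvec k \<and> snd (BR z) \<in> Rnonneg m \<and>
        (\<forall>\<alpha>\<in>Rvec k. \<forall>\<beta>\<in>Rnonneg m.
          Lfun n k m \<eta> c lam v A b z \<alpha> \<beta> \<le> Lfun n k m \<eta> c lam v A b z (fst (BR z)) (snd (BR z)))"
    and J_top: "\<forall>\<alpha> \<beta>. top_indices n s (gamma k m c lam v A \<alpha> \<beta>) (J \<alpha> \<beta>)"
    and init: "zs 0 \<in> Zset n s" "as 0 \<in> Rvec k" "bs 0 \<in> Rvec m"
    and step_ab: "\<forall>t. (as (Suc t), bs (Suc t)) = BR (zs t)"
    and step_z: "\<forall>t. zs (Suc t) = ind_vec (J (as t) (bs t))"
  shows "(\<exists>t0 p. 0 < p \<and> (\<forall>t\<ge>t0. zs (t + p) = zs t \<and> as (t + p) = as t \<and> bs (t + p) = bs t))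
    \<and> (\<forall>zb ab bb t0. (\<forall>t\<ge>t0. zs t = zb \<and> as t = ab \<and> bs t = bb) \<longrightarrow>
        (zb \<in> Zset n s \<and>
         (\<forall>z\<in>Zset n s. maxval n k m \<eta> c lam v A b zb \<le> maxval n k m \<eta> c lam v A b z)) \<and>
        (\<forall>z\<in>Zset n s. \<forall>\<alpha>\<in>Rvec k. \<forall>\<beta>\<in>Rnonneg m.
           Lfun n k m \<eta> c lam v A b zb \<alpha> \<beta> \<le> Lfun n k m \<eta> c lam v A b zb ab bb \<and>
           Lfun n k m \<eta> c lam v A b zb ab bb \<le> Lfun n k m \<eta> c lam v A b z ab bb))"
  
proof -
  define F where "F = (\<lambda>(z, a, b). (ind_vec (J a b), BR z))"
  define st where "st = (\<lambda>t. (zs t, as t, bs t))"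
  have stF: "\<forall>t. st (Suc t) = F (st t)"
    using step_ab step_z unfolding st_def F_def by (metis case_prod_conv)
  define Zi where "Zi = ind_vec ` Pow {..<n}"
  have fZi: "finite Zi" unfolding Zi_def by simp
  define W where "W = Zi \<times> (BR ` insert (zs 0) Zi)"
  have fW: "finite W" unfolding W_def using fZi by simp
  have zsZi: "\<And>t. zs (Suc t) \<in> Zi"
    using step_z J_top unfolding Zi_def top_indices_def by auto
  have inW: "\<And>t. st (Suc (Suc t)) \<in> W"
  proof -
    fix t
    have "(as (Suc (Suc t)), bs (Suc (Suc t))) = BR (zs (Suc t))" using step_ab by simp
    thus "st (Suc (Suc t)) \<in> W" unfolding st_def W_def using zsZi by auto
  qed
  have P1: "\<exists>t0 p. 0 < p \<and> (\<forall>t\<ge>t0. zs (t + p) = zs t \<and> as (t + p) = as t \<and> bs (t + p) = bs t)"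
  proof -
    have "range (\<lambda>t. st (Suc (Suc t))) \<subseteq> W" using inW by auto
    hence "finite (range (\<lambda>t. st (Suc (Suc t))))" using fW finite_subset by blast
    hence "\<not> inj (\<lambda>t. st (Suc (Suc t)))" using finite_imageD infinite_UNIV_nat by blast
    then obtain i j where ij: "i \<noteq> j" "st (Suc (Suc i)) = st (Suc (Suc j))" unfolding inj_def by blast
    then obtain a d where ad: "a < d" "st a = st d"
      by (metis Suc_less_eq linorder_neqE_nat)
    have per: "\<forall>t\<ge>a. zs (t + (d - a)) = zs t \<and> as (t + (d - a)) = as t \<and> bs (t + (d - a)) = bs t"
    proof (intro allI impI)
      fix t assume "a \<le> t"
      then obtain e where t: "t = a + e" using le_Suc_ex by blast
      have "st (a + e) = st (d + e)" using shift_eq[OF stF ad(2)] .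
      moreover have "t + (d - a) = d + e" using t ad by arith
      ultimately have "st (t + (d - a)) = st t" using t by metis
      thus "zs (t + (d - a)) = zs t \<and> as (t + (d - a)) = as t \<and> bs (t + (d - a)) = bs t"
        unfolding st_def by simp
    qed
    show ?thesis using per ad(1) by (intro exI[of _ a] exI[of _ "d - a"]) simp
  qed
  have P2: "\<forall>zb ab bb t0. (\<forall>t\<ge>t0. zs t = zb \<and> as t = ab \<and> bs t = bb) \<longrightarrow>
        (zb \<in> Zset n s \<and>
         (\<forall>z\<in>Zset n s. maxval n k m \<eta> c lam v A b zb \<le> maxval n k m \<eta> c lam v A b z)) \<and>
        (\<forall>z\<in>Zset n s. \<forall>\<alpha>\<in>Rvec k. \<forall>\<beta>\<in>Rnonneg m.
           Lfun n k m \<eta> c lam v A b zb \<alpha> \<beta> \<le> Lfun n k m \<eta> c lam v A b zb ab bb \<and>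
           Lfun n k m \<eta> c lam v A b zb ab bb \<le> Lfun n k m \<eta> c lam v A b z ab bb)"
  proof (intro allI impI)
    fix zb ab bb t0 assume C: "\<forall>t\<ge>t0. zs t = zb \<and> as t = ab \<and> bs t = bb"
    have e1: "zb = ind_vec (J ab bb)" using C step_z[rule_format, of t0] by (metis le_Suc_eq order_refl)
    have e2: "(ab, bb) = BR zb" using C step_ab[rule_format, of t0] by (metis le_Suc_eq order_refl)
    define JJ where "JJ = J ab bb"
    define g where "g = gamma k m c lam v A ab bb"
    have top: "top_indices n s g JJ" using J_top unfolding JJ_def g_def by auto
    hence JJn: "JJ \<subseteq> {..<n}" "card JJ = s" unfolding top_indices_def by auto
    have zbZ: "zb \<in> Zset n s"
    proof -
      have "(\<Sum>j<n. zb j) = (\<Sum>j<n. if j \<in> JJ then 1 else 0)" using e1 unfolding ind_vec_def JJ_def by simp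
      also have "\<dots> = real (card JJ)" using JJn by (simp add: sum.If_cases Int_absorb1)
      finally show ?thesis using e1 JJn unfolding Zset_def ind_vec_def JJ_def by auto
    qed
    have BRz: "ab \<in> Rvec k" "bb \<in> Rnonneg m"
      "\<forall>\<alpha>\<in>Rvec k. \<forall>\<beta>\<in>Rnonneg m. Lfun n k m \<eta> c lam v A b zb \<alpha> \<beta> \<le> Lfun n k m \<eta> c lam v A b zb ab bb"
      using BR_max zbZ e2 by (metis fst_conv snd_conv)+
    have SJ: "{j\<in>{..<n}. zb j = 1} = JJ" using e1 JJn unfolding ind_vec_def JJ_def by auto
    have Lz: "Lfun n k m \<eta> c lam v A b zb ab bb \<le> Lfun n k m \<eta> c lam v A b z ab bb" if z: "z \<in> Zset n s" for z
    proof -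
      have "(\<Sum>j<n. z j * (g j)\<^sup>2) \<le> (\<Sum>j<n. zb j * (g j)\<^sup>2)"
        unfolding zsum_eq(1)[OF z] zsum_eq(1)[OF zbZ] SJ
        by (rule top_sum_ge[OF top]) (use zsum_eq(2)[OF z] in auto)
      hence "(\<eta>/4) * (\<Sum>j<n. z j * (g j)\<^sup>2) \<le> (\<eta>/4) * (\<Sum>j<n. zb j * (g j)\<^sup>2)"
        using eta_pos by (intro mult_left_mono) auto
      thus ?thesis unfolding Lfun_def g_def by linarith
    qed
    have mv: "maxval n k m \<eta> c lam v A b zb \<le> maxval n k m \<eta> c lam v A b z" if z: "z \<in> Zset n s" for z
    proof -
      have "maxval n k m \<eta> c lam v A b zb \<le> Lfun n k m \<eta> c lam v A b zb ab bb"
        unfolding maxval_def using BRz by (intro cSup_least) auto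
      also have "\<dots> \<le> Lfun n k m \<eta> c lam v A b z ab bb" using Lz[OF z] .
      also have "\<dots> \<le> maxval n k m \<eta> c lam v A b z"
      proof -
        obtain \<alpha>0 \<beta>0 where "\<forall>\<alpha>'\<in>Rvec k. \<forall>\<beta>'\<in>Rnonneg m.
          Lfun n k m \<eta> c lam v A b z \<alpha>' \<beta>' \<le> Lfun n k m \<eta> c lam v A b z \<alpha>0 \<beta>0"
          using attained z by blast
        hence bdd: "bdd_above {Lfun n k m \<eta> c lam v A b z \<alpha> \<beta> | \<alpha> \<beta>. \<alpha> \<in> Rvec k \<and> \<beta> \<in> Rnonneg m}"
          unfolding bdd_above_def by blast
        show ?thesis unfolding maxval_def using BRz by (intro cSup_upper[OF _ bdd]) auto
      qed
      finally show ?thesis .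
    qed
    show "(zb \<in> Zset n s \<and>
         (\<forall>z\<in>Zset n s. maxval n k m \<eta> c lam v A b zb \<le> maxval n k m \<eta> c lam v A b z)) \<and>
        (\<forall>z\<in>Zset n s. \<forall>\<alpha>\<in>Rvec k. \<forall>\<beta>\<in>Rnonneg m.
           Lfun n k m \<eta> c lam v A b zb \<alpha> \<beta> \<le> Lfun n k m \<eta> c lam v A b zb ab bb \<and>
           Lfun n k m \<eta> c lam v A b zb ab bb \<le> Lfun n k m \<eta> c lam v A b z ab bb)"
      using zbZ mv BRz(3) Lz by blast
  qed
  show ?thesis using P1 P2 by blast
qed

end
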